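(* Let $S$ be a numerical semigroup. If $\mathrm{Ap}(S)$ is $\alpha$-rectangular then it is $\beta$-rectangular, and if it is $\beta$-rectangular then it is $\gamma$-rectangular. Both implications are strict: $S=\langle 8,10,15\rangle$ has $\beta$-rectangular but not $\alpha$-rectangular Apéry set, and $S=\langle 8,10,11,12\rangle$ has $\gamma$-rectangular but not $\beta$-rectangular Apéry set.
   Context: A numerical semigroup is a submonoid $S$ of $(\mathbb N,+)$ with finite complement in $\mathbb N$; $g_1<\dots<g_\nu$ is its minimal system of generators, $m=g_1$, and $\mathrm{Ap}(S)=\{s\in S: s-m\notin S\}$. A representation of $s\in S$ is an expression $s=\sum_{i=1}^\nu\lambda_ig_i$, $\lambda_i\in\mathbb N$; $\mathrm{ord}(s)$ is the maximum of $\sum\lambda_i$ over all representations; a representation is maximal if $\sum\lambda_i=\mathrm{ord}(s)$. For $i=2,\dots,\nu$: $\alpha_i=\max\{h: hg_i\in\mathrm{Ap}(S)\}$; $\beta_i=\max\{h: hg_i\in\mathrm{Ap}(S),\ \mathrm{ord}(hg_i)=h\}$; $\gamma_i=\max\{h: hg_i\in\mathrm{Ap}(S),\ \mathrm{ord}(hg_i)=h,\ hg_i\text{ has a unique maximal representation}\}$ (all $h\in\mathbb N$). For $\delta\in\{\alpha,\beta,\gamma\}$, $\mathrm{Ap}(S)$ is $\delta$-rectangular if $\mathrm{Ap}(S)=\{\sum_{i=2}^\nu\lambda_ig_i: 0\le\lambda_i\le\delta_i\}$. *)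

theory Defs
  imports Main
begin

definition numerical_semigroup :: "nat set \<Rightarrow> bool" where
  "numerical_semigroup S \<longleftrightarrow> 0 \<in> S \<and> (\<forall>a\<in>S. \<forall>b\<in>S. a + b \<in> S) \<and> finite (UNIV - S)"

definition gen :: "nat set \<Rightarrow> nat set" where
  "gen A = {\<Sum>a\<in>A. l a * a | l. True}"

definition mingens :: "nat set \<Rightarrow> nat set" where
  "mingens S = {g \<in> S. g \<noteq> 0 \<and> \<not> (\<exists>a\<in>S. \<exists>b\<in>S. a \<noteq> 0 \<and> b \<noteq> 0 \<and> g = a + b)}"

text \<open>Multiplicity m = g_1 (smallest generator = smallest nonzero element).\<close>
definition mult :: "nat set \<Rightarrow> nat" where
  "mult S = Min (mingens S)"

definition apery :: "nat set \<Rightarrow> nat set" where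
  "apery S = {s \<in> S. \<not> (\<exists>t\<in>S. s = t + mult S)}"

definition reps :: "nat set \<Rightarrow> nat \<Rightarrow> (nat \<Rightarrow> nat) set" where
  "reps S s = {l. (\<forall>x. x \<notin> mingens S \<longrightarrow> l x = 0) \<and> (\<Sum>g\<in>mingens S. l g * g) = s}"

definition ord :: "nat set \<Rightarrow> nat \<Rightarrow> nat" where
  "ord S s = Max ((\<lambda>l. \<Sum>g\<in>mingens S. l g) ` reps S s)"

definition maxreps :: "nat set \<Rightarrow> nat \<Rightarrow> (nat \<Rightarrow> nat) set" where
  "maxreps S s = {l \<in> reps S s. (\<Sum>g\<in>mingens S. l g) = ord S s}"

definition alpha :: "nat set \<Rightarrow> nat \<Rightarrow> nat" where
  "alpha S g = Max {h. h * g \<in> apery S}"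

definition beta :: "nat set \<Rightarrow> nat \<Rightarrow> nat" where
  "beta S g = Max {h. h * g \<in> apery S \<and> ord S (h * g) = h}"

definition gamma :: "nat set \<Rightarrow> nat \<Rightarrow> nat" where
  "gamma S g = Max {h. h * g \<in> apery S \<and> ord S (h * g) = h \<and> (\<exists>!l. l \<in> maxreps S (h * g))}"

definition rectangular :: "(nat set \<Rightarrow> nat \<Rightarrow> nat) \<Rightarrow> nat set \<Rightarrow> bool" where
  "rectangular \<delta> S \<longleftrightarrow> apery S =
     {\<Sum>g\<in>mingens S - {mult S}. l g * g | l. \<forall>g\<in>mingens S - {mult S}. l g \<le> \<delta> S g}"

end

theory Submission
  imports Defs "HOL-Library.FuncSet"
begin



definition ef :: "nat \<Rightarrow> nat \<Rightarrow> nat \<Rightarrow> nat" where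
  "ef k h = (\<lambda>x. if x = k then h else 0)"

lemma sum_ef_mult: "finite A \<Longrightarrow> k \<in> A \<Longrightarrow> (\<Sum>x\<in>A. ef k h x * x) = h * k"
proof -
  assume "finite A" "k \<in> A"
  have "(\<Sum>x\<in>A. ef k h x * x) = (\<Sum>x\<in>A. if x = k then h * k else 0)"
    by (rule sum.cong) (auto simp: ef_def)
  then show ?thesis using \<open>finite A\<close> \<open>k \<in> A\<close> by simp
qed

lemma sum_ef: "finite A \<Longrightarrow> k \<in> A \<Longrightarrow> (\<Sum>x\<in>A. ef k h x) = h"
  unfolding ef_def by simp

lemma ns_K: "numerical_semigroup S \<Longrightarrow> \<exists>K>0. \<forall>n\<ge>K. n \<in> S"
proof -
  assume "numerical_semigroup S"
  then have "finite (UNIV - S)" by (simp add: numerical_semigroup_def)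
  then obtain k where "UNIV - S \<subseteq> {..<k}" by (auto simp: finite_nat_set_iff_bounded)
  then have "\<forall>n\<ge>Suc k. n \<in> S" by auto
  then show ?thesis by blast
qed

lemma ns_zero: "numerical_semigroup S \<Longrightarrow> 0 \<in> S" by (simp add: numerical_semigroup_def)
lemma ns_add: "numerical_semigroup S \<Longrightarrow> a \<in> S \<Longrightarrow> b \<in> S \<Longrightarrow> a + b \<in> S"
  by (simp add: numerical_semigroup_def)

lemma ns_multiple: "numerical_semigroup S \<Longrightarrow> a \<in> S \<Longrightarrow> k * a \<in> S"
  by (induction k) (auto simp: ns_zero ns_add)

lemma ns_sum: assumes ns: "numerical_semigroup S" and fin: "finite A" and sub: "A \<subseteq> S"
  shows "(\<Sum>a\<in>A. l a * a) \<in> S"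
  using fin sub
proof (induction A rule: finite_induct)
  case empty then show ?case by (simp add: ns_zero ns)
next
  case (insert x F) then show ?case by (simp add: ns_add ns_multiple ns)
qed

lemma mingens_sub: "mingens S \<subseteq> S" by (auto simp: mingens_def)
lemma mingens_pos: "g \<in> mingens S \<Longrightarrow> g > 0" by (auto simp: mingens_def)

lemma mingens_finite: "numerical_semigroup S \<Longrightarrow> finite (mingens S)"
proof -
  assume ns: "numerical_semigroup S"
  obtain K where K: "K > 0" "\<forall>n\<ge>K. n \<in> S" using ns_K[OF ns] by blast
  have "mingens S \<subseteq> {..<2*K}"
  proof
    fix g assume g: "g \<in> mingens S"
    show "g \<in> {..<2*K}"
    proof (rule ccontr)
      assume "g \<notin> {..<2*K}"
      then have "g \<ge> 2*K" by simp
      then have "K \<in> S" "g - K \<in> S" "K \<noteq> 0" "g - K \<noteq> 0" "g = K + (g - K)" using K by auto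
      then show False using g unfolding mingens_def by blast
    qed
  qed
  then show ?thesis using finite_subset by blast
qed

lemma mingens_ne: "numerical_semigroup S \<Longrightarrow> mingens S \<noteq> {}"
proof -
  assume ns: "numerical_semigroup S"
  obtain K where K: "K > 0" "\<forall>n\<ge>K. n \<in> S" using ns_K[OF ns] by blast
  define P where "P = (\<lambda>s. s \<in> S \<and> s \<noteq> 0)"
  have "P K" using K by (simp add: P_def)
  define s0 where "s0 = (LEAST s. P s)"
  have s0: "P s0" unfolding s0_def by (rule LeastI[of P K]) (rule \<open>P K\<close>)
  have "s0 \<in> mingens S"
  proof -
    have "\<not> (\<exists>a\<in>S. \<exists>b\<in>S. a \<noteq> 0 \<and> b \<noteq> 0 \<and> s0 = a + b)"
    proof
      assume "\<exists>a\<in>S. \<exists>b\<in>S. a \<noteq> 0 \<and> b \<noteq> 0 \<and> s0 = a + b"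
      then obtain a b where ab: "a \<in> S" "b \<in> S" "a \<noteq> 0" "b \<noteq> 0" "s0 = a + b" by blast
      then have "P a" by (simp add: P_def)
      then have "s0 \<le> a" unfolding s0_def by (rule Least_le)
      then show False using ab by simp
    qed
    then show ?thesis using s0 by (simp add: mingens_def P_def)
  qed
  then show ?thesis by blast
qed

lemma mult_in: "numerical_semigroup S \<Longrightarrow> mult S \<in> mingens S"
  unfolding mult_def using mingens_finite mingens_ne Min_in by blast

lemma mult_pos: "numerical_semigroup S \<Longrightarrow> mult S > 0"
  using mult_in mingens_pos by blast

lemma mult_S: "numerical_semigroup S \<Longrightarrow> mult S \<in> S"
  using mult_in mingens_sub by blast

lemma reps_S: "numerical_semigroup S \<Longrightarrow> l \<in> reps S s \<Longrightarrow> s \<in> S"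
  unfolding reps_def using ns_sum[of S "mingens S" l] mingens_finite mingens_sub by auto

lemma rep_exists: "numerical_semigroup S \<Longrightarrow> s \<in> S \<Longrightarrow> \<exists>l. l \<in> reps S s"
proof (induction s rule: less_induct)
  case (less s)
  note ns = less.prems(1)
  have fin: "finite (mingens S)" using mingens_finite[OF ns] .
  show ?case
  proof (cases "s = 0")
    case True
    then have "(\<lambda>_. 0) \<in> reps S s" by (simp add: reps_def)
    then show ?thesis by blast
  next
    case nz: False
    show ?thesis
    proof (cases "s \<in> mingens S")
      case True
      have "ef s 1 \<in> reps S s"
        unfolding reps_def using sum_ef_mult[OF fin True, of 1] True by (auto simp: ef_def)
      then show ?thesis by blast
    next
      case False
      then obtain a b where ab: "a \<in> S" "b \<in> S" "a \<noteq> 0" "b \<noteq> 0" "s = a + b"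
        using nz less.prems(2) by (auto simp: mingens_def)
      obtain la where la: "la \<in> reps S a" using less.IH[of a] ab ns by auto
      obtain lb where lb: "lb \<in> reps S b" using less.IH[of b] ab ns by auto
      have "(\<lambda>x. la x + lb x) \<in> reps S s"
        using la lb ab by (simp add: reps_def add_mult_distrib sum.distrib)
      then show ?thesis by blast
    qed
  qed
qed

lemma reps_le: "l \<in> reps S s \<Longrightarrow> numerical_semigroup S \<Longrightarrow> x \<in> mingens S \<Longrightarrow> l x \<le> s"
proof -
  assume l: "l \<in> reps S s" and ns: "numerical_semigroup S" and x: "x \<in> mingens S"
  have "l x * x \<le> (\<Sum>g\<in>mingens S. l g * g)"
    by (rule member_le_sum) (use x mingens_finite[OF ns] in auto)
  moreover have "l x \<le> l x * x" using mingens_pos[OF x] by simp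
  ultimately have "l x \<le> (\<Sum>g\<in>mingens S. l g * g)" by linarith
  then show ?thesis using l by (simp add: reps_def)
qed

lemma reps_finite: "numerical_semigroup S \<Longrightarrow> finite (reps S s)"
proof -
  assume ns: "numerical_semigroup S"
  let ?M = "mingens S"
  have "reps S s \<subseteq> (\<lambda>f x. if x \<in> ?M then f x else 0) ` (PiE ?M (\<lambda>_. {..s}))"
  proof
    fix l assume l: "l \<in> reps S s"
    have "l = (\<lambda>x. if x \<in> ?M then restrict l ?M x else 0)"
      using l by (auto simp: reps_def)
    moreover have "restrict l ?M \<in> PiE ?M (\<lambda>_. {..s})" using reps_le[OF l ns] by auto
    ultimately show "l \<in> (\<lambda>f x. if x \<in> ?M then f x else 0) ` (PiE ?M (\<lambda>_. {..s}))" by blast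
  qed
  moreover have "finite (PiE ?M (\<lambda>_. {..s}))" by (rule finite_PiE) (auto simp: mingens_finite[OF ns])
  ultimately show ?thesis using finite_subset by blast
qed

lemma ord_ge: "numerical_semigroup S \<Longrightarrow> l \<in> reps S s \<Longrightarrow> (\<Sum>g\<in>mingens S. l g) \<le> ord S s"
  unfolding ord_def by (rule Max_ge) (auto simp: reps_finite)

lemma maxrep_exists: "numerical_semigroup S \<Longrightarrow> s \<in> S \<Longrightarrow> \<exists>l\<in>reps S s. (\<Sum>g\<in>mingens S. l g) = ord S s"
proof -
  assume ns: "numerical_semigroup S" and s: "s \<in> S"
  have "ord S s \<in> (\<lambda>l. \<Sum>g\<in>mingens S. l g) ` reps S s"
    unfolding ord_def by (rule Max_in) (use reps_finite[OF ns] rep_exists[OF ns s] in auto)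
  then show ?thesis by auto
qed

lemma single_rep: "numerical_semigroup S \<Longrightarrow> k \<in> mingens S \<Longrightarrow> ef k h \<in> reps S (h * k)"
  unfolding reps_def using sum_ef_mult[OF mingens_finite] by (auto simp: ef_def)

lemma single_ord: "numerical_semigroup S \<Longrightarrow> k \<in> mingens S \<Longrightarrow> h \<le> ord S (h * k)"
  using ord_ge[OF _ single_rep] sum_ef[OF mingens_finite] by metis




lemma ap_S: "x \<in> apery S \<Longrightarrow> x \<in> S" by (simp add: apery_def)

lemma zero_ap: "numerical_semigroup S \<Longrightarrow> 0 \<in> apery S"
  using mult_pos[of S] ns_zero[of S] by (auto simp: apery_def)

lemma ap_finite: "numerical_semigroup S \<Longrightarrow> finite (apery S)"
proof -
  assume ns: "numerical_semigroup S"
  obtain K where K: "K > 0" "\<forall>n\<ge>K. n \<in> S" using ns_K[OF ns] by blast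
  have "apery S \<subseteq> {..<K + mult S}"
  proof
    fix x assume x: "x \<in> apery S"
    show "x \<in> {..<K + mult S}"
    proof (rule ccontr)
      assume "x \<notin> {..<K + mult S}"
      then have "x - mult S \<in> S" "x = (x - mult S) + mult S" using K by auto
      then show False using x by (auto simp: apery_def)
    qed
  qed
  then show ?thesis using finite_subset by blast
qed

lemma Aset_finite: "numerical_semigroup S \<Longrightarrow> g > 0 \<Longrightarrow> finite {h. h * g \<in> apery S}"
proof -
  assume ns: "numerical_semigroup S" and g: "g > 0"
  have "{h. h * g \<in> apery S} = (\<lambda>h. h * g) -` apery S" by auto
  moreover have "inj (\<lambda>h::nat. h * g)" using g by (auto simp: inj_def)
  ultimately show ?thesis using finite_vimageI[OF ap_finite[OF ns]] by simp
qed

lemma ap_sub: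
  assumes ns: "numerical_semigroup S" and x: "x \<in> apery S" and L: "L \<in> reps S x"
    and le: "\<forall>k\<in>mingens S. L' k \<le> L k"
  shows "(\<Sum>k\<in>mingens S. L' k * k) \<in> apery S"
proof -
  let ?M = "mingens S"
  have fin: "finite ?M" using mingens_finite[OF ns] .
  define y where "y = (\<Sum>k\<in>?M. L' k * k)"
  define z where "z = (\<Sum>k\<in>?M. (L k - L' k) * k)"
  have yS: "y \<in> S" "z \<in> S" unfolding y_def z_def using ns_sum[OF ns fin mingens_sub] by auto
  have "(\<Sum>k\<in>?M. L k * k) = (\<Sum>k\<in>?M. L' k * k + (L k - L' k) * k)"
    by (rule sum.cong) (use le in \<open>auto simp: add_mult_distrib[symmetric]\<close>)
  then have xyz: "x = y + z" using L unfolding y_def z_def reps_def by (simp add: sum.distrib)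
  show ?thesis
  proof -
    have "\<not> (\<exists>t\<in>S. y = t + mult S)"
    proof
      assume "\<exists>t\<in>S. y = t + mult S"
      then obtain t where t: "t \<in> S" "y = t + mult S" by blast
      then have "t + z \<in> S" "x = (t + z) + mult S" using yS xyz ns_add[OF ns] by auto
      then show False using x by (auto simp: apery_def)
    qed
    then show ?thesis using yS unfolding y_def apery_def by simp
  qed
qed

lemma ap_single:
  assumes ns: "numerical_semigroup S" and x: "x \<in> apery S" and L: "L \<in> reps S x"
    and k: "k \<in> mingens S"
  shows "L k * k \<in> apery S"
proof -
  have "(\<Sum>j\<in>mingens S. ef k (L k) j * j) \<in> apery S"
    by (rule ap_sub[OF ns x L]) (auto simp: ef_def)
  then show ?thesis using sum_ef_mult[OF mingens_finite[OF ns] k] by simp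
qed

lemma ap_mult0:
  assumes ns: "numerical_semigroup S" and x: "x \<in> apery S" and L: "L \<in> reps S x"
  shows "L (mult S) = 0"
proof (rule ccontr)
  assume "L (mult S) \<noteq> 0"
  then obtain j where j: "L (mult S) = Suc j" using not0_implies_Suc by blast
  have "L (mult S) * mult S \<in> apery S" by (rule ap_single[OF ns x L mult_in[OF ns]])
  moreover have "j * mult S \<in> S" by (rule ns_multiple[OF ns mult_S[OF ns]])
  ultimately show False using j by (auto simp: apery_def)
qed

lemma ap_le_alpha:
  assumes ns: "numerical_semigroup S" and x: "x \<in> apery S" and L: "L \<in> reps S x"
    and k: "k \<in> mingens S"
  shows "L k \<le> alpha S k"
  unfolding alpha_def
  by (rule Max_ge) (use Aset_finite[OF ns mingens_pos[OF k]] ap_single[OF ns x L k] in auto)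

lemma sum_remove_upd:
  assumes fin: "finite M" and k: "k \<in> M"
  shows "(\<Sum>x\<in>M. f x) = f k + (\<Sum>x\<in>M. (f(k:=0)) x)"
proof -
  have "(\<Sum>x\<in>M. (f(k:=0)) x) = (f(k:=0)) k + (\<Sum>x\<in>M - {k}. (f(k:=0)) x)"
    by (rule sum.remove[OF fin k])
  also have "\<dots> = (\<Sum>x\<in>M - {k}. f x)" by (simp; rule sum.cong; auto)
  finally show ?thesis using sum.remove[OF fin k, of f] by simp
qed

lemma ap_maxrep:
  assumes ns: "numerical_semigroup S" and x: "x \<in> apery S" and U: "U \<in> reps S x"
    and Umax: "(\<Sum>g\<in>mingens S. U g) = ord S x" and k: "k \<in> mingens S"
  shows "U k * k \<in> apery S \<and> ord S (U k * k) = U k"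
proof -
  let ?M = "mingens S"
  have fin: "finite ?M" using mingens_finite[OF ns] .
  have ap: "U k * k \<in> apery S" by (rule ap_single[OF ns x U k])
  obtain R where R: "R \<in> reps S (U k * k)" "(\<Sum>g\<in>?M. R g) = ord S (U k * k)"
    using maxrep_exists[OF ns ap_S[OF ap]] by blast
  define U0 where "U0 = U(k:=0)"
  define V where "V = (\<lambda>y. U0 y + R y)"
  have s1: "(\<Sum>g\<in>?M. U g * g) = U k * k + (\<Sum>g\<in>?M. U0 g * g)"
  proof -
    have "(\<Sum>g\<in>?M. U0 g * g) = (\<Sum>g\<in>?M. ((\<lambda>g. U g * g)(k:=0)) g)"
      by (rule sum.cong) (auto simp: U0_def)
    then show ?thesis using sum_remove_upd[OF fin k, of "\<lambda>g. U g * g"] by simp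
  qed
  have s2: "(\<Sum>g\<in>?M. U g) = U k + (\<Sum>g\<in>?M. U0 g)"
    using sum_remove_upd[OF fin k, of U] unfolding U0_def by simp
  have V1: "\<forall>y. y \<notin> ?M \<longrightarrow> V y = 0" using U R unfolding V_def U0_def reps_def by simp
  have "(\<Sum>g\<in>?M. V g * g) = (\<Sum>g\<in>?M. U0 g * g) + (\<Sum>g\<in>?M. R g * g)"
    unfolding V_def by (simp add: add_mult_distrib sum.distrib)
  also have "\<dots> = x" using s1 U R(1) unfolding reps_def by simp
  finally have "V \<in> reps S x" using V1 unfolding reps_def by simp
  then have "(\<Sum>g\<in>?M. V g) \<le> ord S x" by (rule ord_ge[OF ns])
  then have "(\<Sum>g\<in>?M. U0 g) + ord S (U k * k) \<le> U k + (\<Sum>g\<in>?M. U0 g)"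
    using Umax s2 R(2) unfolding V_def by (simp add: sum.distrib)
  then have "ord S (U k * k) \<le> U k" by simp
  moreover have "U k \<le> ord S (U k * k)" by (rule single_ord[OF ns k])
  ultimately show ?thesis using ap by simp
qed

lemma ap_le_beta:
  assumes ns: "numerical_semigroup S" and x: "x \<in> apery S" and U: "U \<in> reps S x"
    and Umax: "(\<Sum>g\<in>mingens S. U g) = ord S x" and k: "k \<in> mingens S"
  shows "U k \<le> beta S k"
proof -
  have fin: "finite {h. h * k \<in> apery S \<and> ord S (h * k) = h}"
    by (rule finite_subset[OF _ Aset_finite[OF ns mingens_pos[OF k]]]) auto
  show ?thesis unfolding beta_def
    by (rule Max_ge[OF fin]) (use ap_maxrep[OF assms] in auto)
qed




lemma ord0: assumes ns: "numerical_semigroup S" shows "ord S 0 = 0"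
proof -
  obtain l where l: "l \<in> reps S 0" "(\<Sum>g\<in>mingens S. l g) = ord S 0"
    using maxrep_exists[OF ns ns_zero[OF ns]] by blast
  have "\<forall>g\<in>mingens S. l g * g = 0" using l(1) mingens_finite[OF ns] by (simp add: reps_def)
  then have "\<forall>g\<in>mingens S. l g = 0" using mingens_pos by fastforce
  then show ?thesis using l(2) by simp
qed

lemma sum_restrict_mult:
  fixes c :: "nat \<Rightarrow> nat"
  assumes fin: "finite M" and sub: "A \<subseteq> M"
  shows "(\<Sum>x\<in>M. (if x \<in> A then c x else 0) * x) = (\<Sum>x\<in>A. c x * x)"
proof -
  have "(\<Sum>x\<in>M. (if x \<in> A then c x else 0) * x) = (\<Sum>x\<in>M. if x \<in> A then c x * x else 0)"
    by (rule sum.cong) auto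
  also have "\<dots> = (\<Sum>x\<in>M \<inter> A. c x * x)" by (rule sum.inter_restrict[OF fin, symmetric])
  also have "M \<inter> A = A" using sub by blast
  finally show ?thesis .
qed

lemma sum_restrict:
  fixes c :: "nat \<Rightarrow> nat"
  assumes fin: "finite M" and sub: "A \<subseteq> M"
  shows "(\<Sum>x\<in>M. (if x \<in> A then c x else 0)) = (\<Sum>x\<in>A. c x)"
proof -
  have "(\<Sum>x\<in>M. (if x \<in> A then c x else 0)) = (\<Sum>x\<in>M \<inter> A. c x)" by (rule sum.inter_restrict[OF fin, symmetric])
  also have "M \<inter> A = A" using sub by blast
  finally show ?thesis .
qed

lemma sum_single_support:
  assumes fin: "finite M" and g: "g \<in> M" and z: "\<forall>x\<in>M - {g}. l x = 0"
  shows "(\<Sum>x\<in>M. l x) = l g"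
  using sum.remove[OF fin g, of l] z by simp

lemma rect_mem:
  assumes "rectangular \<delta> S"
  shows "(\<Sum>k\<in>mingens S - {mult S}. \<delta> S k * k) \<in> apery S"
  using assms unfolding rectangular_def by blast

lemma alpha_beta_eq:
  assumes ns: "numerical_semigroup S" and rect: "rectangular alpha S"
    and g: "g \<in> mingens S - {mult S}"
  shows "beta S g = alpha S g"
proof -
  let ?M = "mingens S" and ?m = "mult S"
  let ?G = "?M - {?m}"
  have fin: "finite ?M" using mingens_finite[OF ns] .
  have finG: "finite ?G" using fin by simp
  have gM: "g \<in> ?M" using g by simp
  define W where "W = (\<Sum>k\<in>?G. alpha S k * k)"
  have W: "W \<in> apery S" unfolding W_def by (rule rect_mem[OF rect])
  have key: "ord S (h * g) = h" if hg: "h * g \<in> apery S" for h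
  proof -
    have hle: "h \<le> alpha S g" unfolding alpha_def
      by (rule Max_ge) (use Aset_finite[OF ns mingens_pos[OF gM]] hg in auto)
    define d where "d = alpha S g - h"
    obtain l where l: "l \<in> reps S (h * g)" "(\<Sum>x\<in>?M. l x) = ord S (h * g)"
      using maxrep_exists[OF ns ap_S[OF hg]] by blast
    define c where "c = (\<lambda>x. if x = g then d else alpha S x)"
    define L where "L = (\<lambda>x. l x + (if x \<in> ?G then c x else 0))"
    have "(\<Sum>x\<in>?M. L x * x) = (\<Sum>x\<in>?M. l x * x) + (\<Sum>x\<in>?M. (if x \<in> ?G then c x else 0) * x)"
      unfolding L_def by (simp add: add_mult_distrib sum.distrib)
    also have "(\<Sum>x\<in>?M. (if x \<in> ?G then c x else 0) * x) = (\<Sum>x\<in>?G. c x * x)"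
      by (rule sum_restrict_mult[OF fin]) auto
    also have "(\<Sum>x\<in>?G. c x * x) = d * g + (\<Sum>x\<in>?G - {g}. alpha S x * x)"
      using sum.remove[OF finG g, of "\<lambda>x. c x * x"] unfolding c_def by simp
    also have "(\<Sum>x\<in>?M. l x * x) = h * g" using l(1) by (simp add: reps_def)
    also have "h * g + (d * g + (\<Sum>x\<in>?G - {g}. alpha S x * x)) = alpha S g * g + (\<Sum>x\<in>?G - {g}. alpha S x * x)"
      using hle unfolding d_def by (simp add: add_mult_distrib[symmetric])
    also have "\<dots> = W" unfolding W_def using sum.remove[OF finG g, of "\<lambda>x. alpha S x * x"] by simp
    finally have Ls: "(\<Sum>x\<in>?M. L x * x) = W" .
    have "L \<in> reps S W" using Ls l(1) unfolding reps_def L_def by auto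
    note LW = this
    have z: "\<forall>x\<in>?M - {g}. l x = 0"
    proof
      fix x assume x: "x \<in> ?M - {g}"
      show "l x = 0"
      proof (cases "x = ?m")
        case True
        then show ?thesis using ap_mult0[OF ns W LW] g unfolding L_def by simp
      next
        case False
        then have "x \<in> ?G" "x \<noteq> g" using x by auto
        then show ?thesis using ap_le_alpha[OF ns W LW, of x] x unfolding L_def c_def by simp
      qed
    qed
    have "l g + d \<le> alpha S g" using ap_le_alpha[OF ns W LW gM] g unfolding L_def c_def by simp
    then have "l g \<le> h" using hle unfolding d_def by simp
    then have "ord S (h * g) \<le> h" using l(2) sum_single_support[OF fin gM z] by simp
    then show ?thesis using single_ord[OF ns gM, of h] by simp
  qed
  have "{h. h * g \<in> apery S \<and> ord S (h * g) = h} = {h. h * g \<in> apery S}" using key by auto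
  then show ?thesis unfolding alpha_def beta_def by simp
qed

lemma beta_gamma_eq:
  assumes ns: "numerical_semigroup S" and rect: "rectangular beta S"
    and g: "g \<in> mingens S - {mult S}"
  shows "gamma S g = beta S g"
proof -
  let ?M = "mingens S" and ?m = "mult S"
  let ?G = "?M - {?m}"
  have fin: "finite ?M" using mingens_finite[OF ns] .
  have finG: "finite ?G" using fin by simp
  have gM: "g \<in> ?M" using g by simp
  have mM: "?m \<in> ?M" using mult_in[OF ns] .
  define W where "W = (\<Sum>k\<in>?G. beta S k * k)"
  have W: "W \<in> apery S" unfolding W_def by (rule rect_mem[OF rect])
  have ordW: "ord S W = (\<Sum>k\<in>?G. beta S k)"
  proof (rule antisym)
    obtain U where U: "U \<in> reps S W" "(\<Sum>x\<in>?M. U x) = ord S W"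
      using maxrep_exists[OF ns ap_S[OF W]] by blast
    have "(\<Sum>x\<in>?M. U x) = U ?m + (\<Sum>x\<in>?G. U x)" by (rule sum.remove[OF fin mM])
    also have "\<dots> = (\<Sum>x\<in>?G. U x)" using ap_mult0[OF ns W U(1)] by simp
    also have "\<dots> \<le> (\<Sum>x\<in>?G. beta S x)"
      by (rule sum_mono) (use ap_le_beta[OF ns W U(1) U(2)] in auto)
    finally show "ord S W \<le> (\<Sum>k\<in>?G. beta S k)" using U(2) by simp
  next
    define B where "B = (\<lambda>x. if x \<in> ?G then beta S x else 0)"
    have "(\<Sum>x\<in>?M. B x * x) = W" unfolding B_def W_def by (rule sum_restrict_mult[OF fin]) auto
    then have "B \<in> reps S W" unfolding reps_def B_def by auto
    then have "(\<Sum>x\<in>?M. B x) \<le> ord S W" by (rule ord_ge[OF ns])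
    moreover have "(\<Sum>x\<in>?M. B x) = (\<Sum>k\<in>?G. beta S k)" unfolding B_def by (rule sum_restrict[OF fin]) auto
    ultimately show "(\<Sum>k\<in>?G. beta S k) \<le> ord S W" by simp
  qed
  define h where "h = beta S g"
  let ?B = "{h. h * g \<in> apery S \<and> ord S (h * g) = h}"
  let ?C = "{h. h * g \<in> apery S \<and> ord S (h * g) = h \<and> (\<exists>!l. l \<in> maxreps S (h * g))}"
  have finB: "finite ?B"
    by (rule finite_subset[OF _ Aset_finite[OF ns mingens_pos[OF gM]]]) auto
  have "0 \<in> ?B" using zero_ap[OF ns] ord0[OF ns] by simp
  then have hB: "h \<in> ?B" unfolding h_def beta_def using finB Max_in by blast
  have uniq: "\<exists>!l. l \<in> maxreps S (h * g)"
  proof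
    show "ef g h \<in> maxreps S (h * g)"
      using single_rep[OF ns gM] sum_ef[OF fin gM] hB by (simp add: maxreps_def)
  next
    fix l assume lm: "l \<in> maxreps S (h * g)"
    then have l: "l \<in> reps S (h * g)" "(\<Sum>x\<in>?M. l x) = h" using hB by (auto simp: maxreps_def)
    define V where "V = (\<lambda>x. l x + (if x \<in> ?G - {g} then beta S x else 0))"
    have "(\<Sum>x\<in>?M. V x * x) = (\<Sum>x\<in>?M. l x * x) + (\<Sum>x\<in>?M. (if x \<in> ?G - {g} then beta S x else 0) * x)"
      unfolding V_def by (simp add: add_mult_distrib sum.distrib)
    also have "(\<Sum>x\<in>?M. (if x \<in> ?G - {g} then beta S x else 0) * x) = (\<Sum>x\<in>?G - {g}. beta S x * x)"
      by (rule sum_restrict_mult[OF fin]) auto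
    also have "(\<Sum>x\<in>?M. l x * x) = h * g" using l(1) by (simp add: reps_def)
    also have "h * g + (\<Sum>x\<in>?G - {g}. beta S x * x) = W"
      unfolding W_def h_def using sum.remove[OF finG g, of "\<lambda>x. beta S x * x"] by simp
    finally have Vs: "(\<Sum>x\<in>?M. V x * x) = W" .
    have VW: "V \<in> reps S W" using Vs l(1) unfolding reps_def V_def by auto
    have "(\<Sum>x\<in>?M. V x) = (\<Sum>x\<in>?M. l x) + (\<Sum>x\<in>?M. (if x \<in> ?G - {g} then beta S x else 0))"
      unfolding V_def by (simp add: sum.distrib)
    also have "(\<Sum>x\<in>?M. (if x \<in> ?G - {g} then beta S x else 0)) = (\<Sum>x\<in>?G - {g}. beta S x)"
      by (rule sum_restrict[OF fin]) auto
    also have "(\<Sum>x\<in>?M. l x) + (\<Sum>x\<in>?G - {g}. beta S x) = ord S W"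
      unfolding ordW using l(2) sum.remove[OF finG g, of "beta S"] unfolding h_def by simp
    finally have Vmax: "(\<Sum>x\<in>?M. V x) = ord S W" .
    have z: "\<forall>x\<in>?M - {g}. l x = 0"
    proof
      fix x assume x: "x \<in> ?M - {g}"
      show "l x = 0"
      proof (cases "x = ?m")
        case True
        then show ?thesis using ap_mult0[OF ns W VW] g unfolding V_def by simp
      next
        case False
        then have "x \<in> ?G - {g}" using x by auto
        then show ?thesis using ap_le_beta[OF ns W VW Vmax, of x] x unfolding V_def by simp
      qed
    qed
    have lg: "l g = h" using l(2) sum_single_support[OF fin gM z] by simp
    show "l = ef g h"
    proof
      fix x show "l x = ef g h x"
      proof (cases "x \<in> ?M")
        case True then show ?thesis using z lg by (auto simp: ef_def)
      next
        case False then show ?thesis using l(1) gM by (auto simp: ef_def reps_def)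
      qed
    qed
  qed
  have hC: "h \<in> ?C" using hB uniq by simp
  have finC: "finite ?C" by (rule finite_subset[OF _ finB]) auto
  have "\<forall>y\<in>?C. y \<le> h" unfolding h_def beta_def using finB Max_ge by auto
  then have "Max ?C = h" using Max_eqI[OF finC] hC by blast
  then show ?thesis unfolding gamma_def h_def by simp
qed

lemma general_part:
  "numerical_semigroup S \<Longrightarrow> (rectangular alpha S \<longrightarrow> rectangular beta S) \<and>
            (rectangular beta S \<longrightarrow> rectangular gamma S)"
proof (intro conjI impI)
  assume ns: "numerical_semigroup S"
  {
    assume r: "rectangular alpha S"
    have e: "\<And>g. g \<in> mingens S - {mult S} \<Longrightarrow> beta S g = alpha S g" by (rule alpha_beta_eq[OF ns r])
    show "rectangular beta S" using r unfolding rectangular_def using e by (auto; metis)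
  }
  {
    assume r: "rectangular beta S"
    have e: "\<And>g. g \<in> mingens S - {mult S} \<Longrightarrow> gamma S g = beta S g" by (rule beta_gamma_eq[OF ns r])
    show "rectangular gamma S" using r unfolding rectangular_def using e by (auto; metis)
  }
qed



lemma sa_mem: "8*a + 10*b + 15*c \<in> gen {8,10,15}"
proof -
  show ?thesis unfolding gen_def
    by (rule CollectI, rule exI[of _ "(\<lambda>x. if x = 8 then a else if x = 10 then b else c)"]) simp
qed

lemma sa_gen: "gen {8,10,15} = {x. \<exists>a b c. x = 8*a + 10*b + 15*c}"
proof
  show "gen {8,10,15} \<subseteq> {x. \<exists>a b c. x = 8*a + 10*b + 15*c}"
  proof
    fix x assume "x \<in> gen {8,10,15}"
    then obtain l where "x = (\<Sum>a\<in>{8,10,15}. l a * a)" unfolding gen_def by blast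
    then have "x = 8*(l 8) + 10*(l 10) + 15*(l 15)" by simp
    then show "x \<in> {x. \<exists>a b c. x = 8*a + 10*b + 15*c}" by blast
  qed
next
  show "{x. \<exists>a b c. x = 8*a + 10*b + 15*c} \<subseteq> gen {8,10,15}" using sa_mem by blast
qed

lemma sa_small: fixes a b c :: nat assumes "8*a + 10*b + 15*c < 38"
  shows "8*a + 10*b + 15*c \<in> {0, 8, 10, 15, 16, 18, 20, 23, 24, 25, 26, 28, 30, 31, 32, 33, 34, 35, 36}"
proof -
  have "a \<in> {0,1,2,3,4}" "b \<in> {0,1,2,3}" "c \<in> {0,1,2}" using assms by auto
  then show ?thesis using assms by auto
qed

lemma sa_big: fixes x :: nat shows "x \<ge> 38 \<Longrightarrow> x \<in> gen {8,10,15}"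
proof (induction x rule: less_induct)
  case (less x)
  show ?case
  proof (cases "x \<ge> 46")
    case True
    then have "x - 8 \<in> gen {8,10,15}" using less by auto
    then obtain a b c where "x - 8 = 8*a + 10*b + 15*c" unfolding sa_gen by blast
    then have "x = 8*(a+1) + 10*b + 15*c" using True by simp
    then show ?thesis using sa_mem by metis
  next
    case False
    then have xs: "x \<in> {38,39,40,41,42,43,44,45}" using less.prems by auto
    have w38: "38 \<in> gen {8,10,15}" using sa_mem[of 1 0 2] by simp
    have w39: "39 \<in> gen {8,10,15}" using sa_mem[of 3 0 1] by simp
    have w40: "40 \<in> gen {8,10,15}" using sa_mem[of 0 1 2] by simp
    have w41: "41 \<in> gen {8,10,15}" using sa_mem[of 2 1 1] by simp
    have w42: "42 \<in> gen {8,10,15}" using sa_mem[of 4 1 0] by simp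
    have w43: "43 \<in> gen {8,10,15}" using sa_mem[of 1 2 1] by simp
    have w44: "44 \<in> gen {8,10,15}" using sa_mem[of 3 2 0] by simp
    have w45: "45 \<in> gen {8,10,15}" using sa_mem[of 0 0 3] by simp
    show ?thesis using xs w38 w39 w40 w41 w42 w43 w44 w45 by auto
  qed
qed

lemma sa_P: fixes x :: nat assumes "x \<in> {0, 8, 10, 15, 16, 18, 20, 23, 24, 25, 26, 28, 30, 31, 32, 33, 34, 35, 36}" shows "x \<in> gen {8,10,15}"
proof -
  have w0: "0 \<in> gen {8,10,15}" using sa_mem[of 0 0 0] by simp
  have w8: "8 \<in> gen {8,10,15}" using sa_mem[of 1 0 0] by simp
  have w10: "10 \<in> gen {8,10,15}" using sa_mem[of 0 1 0] by simp
  have w15: "15 \<in> gen {8,10,15}" using sa_mem[of 0 0 1] by simp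
  have w16: "16 \<in> gen {8,10,15}" using sa_mem[of 2 0 0] by simp
  have w18: "18 \<in> gen {8,10,15}" using sa_mem[of 1 1 0] by simp
  have w20: "20 \<in> gen {8,10,15}" using sa_mem[of 0 2 0] by simp
  have w23: "23 \<in> gen {8,10,15}" using sa_mem[of 1 0 1] by simp
  have w24: "24 \<in> gen {8,10,15}" using sa_mem[of 3 0 0] by simp
  have w25: "25 \<in> gen {8,10,15}" using sa_mem[of 0 1 1] by simp
  have w26: "26 \<in> gen {8,10,15}" using sa_mem[of 2 1 0] by simp
  have w28: "28 \<in> gen {8,10,15}" using sa_mem[of 1 2 0] by simp
  have w30: "30 \<in> gen {8,10,15}" using sa_mem[of 0 0 2] by simp
  have w31: "31 \<in> gen {8,10,15}" using sa_mem[of 2 0 1] by simp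
  have w32: "32 \<in> gen {8,10,15}" using sa_mem[of 4 0 0] by simp
  have w33: "33 \<in> gen {8,10,15}" using sa_mem[of 1 1 1] by simp
  have w34: "34 \<in> gen {8,10,15}" using sa_mem[of 3 1 0] by simp
  have w35: "35 \<in> gen {8,10,15}" using sa_mem[of 0 2 1] by simp
  have w36: "36 \<in> gen {8,10,15}" using sa_mem[of 2 2 0] by simp
  show ?thesis using assms w0 w8 w10 w15 w16 w18 w20 w23 w24 w25 w26 w28 w30 w31 w32 w33 w34 w35 w36 by auto
qed

lemma sa_char: "x \<in> gen {8,10,15} \<longleftrightarrow> x \<in> {0, 8, 10, 15, 16, 18, 20, 23, 24, 25, 26, 28, 30, 31, 32, 33, 34, 35, 36} \<or> x \<ge> 38"
proof
  assume "x \<in> gen {8,10,15}"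
  then obtain a b c where x: "x = 8*a + 10*b + 15*c" unfolding sa_gen by blast
  show "x \<in> {0, 8, 10, 15, 16, 18, 20, 23, 24, 25, 26, 28, 30, 31, 32, 33, 34, 35, 36} \<or> x \<ge> 38"
  proof (cases "x < 38")
    case True then show ?thesis using sa_small[of a b c] x by simp
  qed simp
next
  assume "x \<in> {0, 8, 10, 15, 16, 18, 20, 23, 24, 25, 26, 28, 30, 31, 32, 33, 34, 35, 36} \<or> x \<ge> 38"
  then show "x \<in> gen {8,10,15}" using sa_P sa_big by blast
qed

lemma sa_ns: "numerical_semigroup (gen {8,10,15})"
proof -
  have "0 \<in> gen {8,10,15}" using sa_mem[of 0 0 0] by simp
  moreover have "\<forall>a\<in>gen {8,10,15}. \<forall>b\<in>gen {8,10,15}. a + b \<in> gen {8,10,15}"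
  proof (intro ballI)
    fix x y assume "x \<in> gen {8,10,15}" "y \<in> gen {8,10,15}"
    then obtain a b c a' b' c' where "x = 8*a + 10*b + 15*c" "y = 8*a' + 10*b' + 15*c'"
      unfolding sa_gen by blast
    then have "x + y = 8*(a+a') + 10*(b+b') + 15*(c+c')" by (simp add: algebra_simps)
    then show "x + y \<in> gen {8,10,15}" using sa_mem by metis
  qed
  moreover have "finite (UNIV - gen {8,10,15})"
  proof -
    have "UNIV - gen {8,10,15} \<subseteq> {..<38}"
    proof
      fix x assume "x \<in> UNIV - gen {8,10,15}"
      then have "\<not> x \<ge> 38" using sa_big by blast
      then show "x \<in> {..<38}" by simp
    qed
    then show ?thesis using finite_subset by blast
  qed
  ultimately show ?thesis unfolding numerical_semigroup_def by blast
qed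

lemma sa_pos: "y \<in> gen {8,10,15} \<Longrightarrow> y \<noteq> 0 \<Longrightarrow> y \<ge> 8"
proof -
  assume "y \<in> gen {8,10,15}" "y \<noteq> 0"
  then have "y \<in> {0, 8, 10, 15, 16, 18, 20, 23, 24, 25, 26, 28, 30, 31, 32, 33, 34, 35, 36} \<or> y \<ge> 38" unfolding sa_char by blast
  then show "y \<ge> 8" using \<open>y \<noteq> 0\<close> by (elim disjE insertE) auto
qed

lemma sa_mingens: "mingens (gen {8,10,15}) = {8,10,15}"
proof
  show "mingens (gen {8,10,15}) \<subseteq> {8,10,15}"
  proof
    fix x assume mg: "x \<in> mingens (gen {8,10,15})"
    then have "x \<in> gen {8,10,15}" "x \<noteq> 0" by (auto simp: mingens_def)
    then obtain a b c where x: "x = 8*a + 10*b + 15*c" unfolding sa_gen by blast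
    have ca: "a > 0 \<Longrightarrow> x = 8"
    proof (rule ccontr)
      assume h: "a > 0" "x \<noteq> 8"
      have "8*(a-1) + 10*b + 15*c \<in> gen {8,10,15}" by (rule sa_mem)
      moreover have "x = 8 + (8*(a-1) + 10*b + 15*c)" using h x by (simp add: algebra_simps)
      moreover have "8 \<in> gen {8,10,15}" using sa_mem[of 1 0 0] by simp
      ultimately show False using h mg unfolding mingens_def by force
    qed
    have cb: "b > 0 \<Longrightarrow> x = 10"
    proof (rule ccontr)
      assume h: "b > 0" "x \<noteq> 10"
      have "8*a + 10*(b-1) + 15*c \<in> gen {8,10,15}" by (rule sa_mem)
      moreover have "x = 10 + (8*a + 10*(b-1) + 15*c)" using h x by (simp add: algebra_simps)
      moreover have "10 \<in> gen {8,10,15}" using sa_mem[of 0 1 0] by simp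
      ultimately show False using h mg unfolding mingens_def by force
    qed
    have cc: "c > 0 \<Longrightarrow> x = 15"
    proof (rule ccontr)
      assume h: "c > 0" "x \<noteq> 15"
      have "8*a + 10*b + 15*(c-1) \<in> gen {8,10,15}" by (rule sa_mem)
      moreover have "x = 15 + (8*a + 10*b + 15*(c-1))" using h x by (simp add: algebra_simps)
      moreover have "15 \<in> gen {8,10,15}" using sa_mem[of 0 0 1] by simp
      ultimately show False using h mg unfolding mingens_def by force
    qed
    have "a > 0 \<or> b > 0 \<or> c > 0" using x \<open>x \<noteq> 0\<close> by auto
    then show "x \<in> {8,10,15}" using ca cb cc by auto
  qed
next
  show "{8,10,15} \<subseteq> mingens (gen {8,10,15})"
  proof
    fix x :: nat assume x: "x \<in> {8,10,15}"
    then have "x \<in> gen {8,10,15}" using sa_char by auto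
    moreover have "\<not> (\<exists>a\<in>gen {8,10,15}. \<exists>b\<in>gen {8,10,15}. a \<noteq> 0 \<and> b \<noteq> 0 \<and> x = a + b)"
    proof
      assume "\<exists>a\<in>gen {8,10,15}. \<exists>b\<in>gen {8,10,15}. a \<noteq> 0 \<and> b \<noteq> 0 \<and> x = a + b"
      then obtain a b where ab: "a \<in> gen {8,10,15}" "b \<in> gen {8,10,15}" "a \<noteq> 0" "b \<noteq> 0" "x = a + b" by blast
      then have "a \<ge> 8" "b \<ge> 8" using sa_pos by auto
      then show False using x ab(5) by auto
    qed
    ultimately show "x \<in> mingens (gen {8,10,15})" using x unfolding mingens_def by auto
  qed
qed

lemma sa_mult: "mult (gen {8,10,15}) = 8"
  unfolding mult_def sa_mingens by simp

lemma sa_apery: "apery (gen {8,10,15}) = {0, 10, 15, 20, 25, 30, 35, 45}"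
proof (rule set_eqI)
  fix x :: nat
  have iff: "x \<in> apery (gen {8,10,15}) \<longleftrightarrow> (x \<in> {0, 8, 10, 15, 16, 18, 20, 23, 24, 25, 26, 28, 30, 31, 32, 33, 34, 35, 36} \<or> x \<ge> 38) \<and> \<not> (x \<ge> 8 \<and> (x - 8 \<in> {0, 8, 10, 15, 16, 18, 20, 23, 24, 25, 26, 28, 30, 31, 32, 33, 34, 35, 36} \<or> x - 8 \<ge> 38))"
  proof -
    have "(\<exists>t\<in>gen {8,10,15}. x = t + 8) \<longleftrightarrow> (x \<ge> 8 \<and> x - 8 \<in> gen {8,10,15})" by force
    then have "x \<in> apery (gen {8,10,15}) \<longleftrightarrow> x \<in> gen {8,10,15} \<and> \<not> (x \<ge> 8 \<and> x - 8 \<in> gen {8,10,15})"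
      unfolding apery_def sa_mult by blast
    then show ?thesis by (simp only: sa_char)
  qed
  show "x \<in> apery (gen {8,10,15}) \<longleftrightarrow> x \<in> {0, 10, 15, 20, 25, 30, 35, 45}"
  proof (cases "x < 46")
    case True
    have all: "\<forall>x\<in>{..<46::nat}. ((x \<in> {0, 8, 10, 15, 16, 18, 20, 23, 24, 25, 26, 28, 30, 31, 32, 33, 34, 35, 36} \<or> x \<ge> 38) \<and> \<not> (x \<ge> 8 \<and> (x - 8 \<in> {0, 8, 10, 15, 16, 18, 20, 23, 24, 25, 26, 28, 30, 31, 32, 33, 34, 35, 36} \<or> x - 8 \<ge> 38))) \<longleftrightarrow> x \<in> {0, 10, 15, 20, 25, 30, 35, 45}"
      by (simp add: lessThan_nat_numeral)
    show ?thesis unfolding iff using bspec[OF all, of x] True by simp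
  next
    case False
    then have "x \<notin> {0, 8, 10, 15, 16, 18, 20, 23, 24, 25, 26, 28, 30, 31, 32, 33, 34, 35, 36}" "x - 8 \<notin> {0, 8, 10, 15, 16, 18, 20, 23, 24, 25, 26, 28, 30, 31, 32, 33, 34, 35, 36}" "x \<notin> {0, 10, 15, 20, 25, 30, 35, 45}" using False by auto
    then show ?thesis unfolding iff using False by simp
  qed
qed

lemma sa_reps: "reps (gen {8,10,15}) s = {l. (\<forall>x. x \<notin> {8,10,15} \<longrightarrow> l x = 0) \<and> l 8 * 8 + l 10 * 10 + l 15 * 15 = s}"
  unfolding reps_def sa_mingens by (simp add: add.assoc)

lemma sa_sumM: "(\<Sum>g\<in>mingens (gen {8,10,15}). l g) = l 8 + l 10 + l 15"
  unfolding sa_mingens by (simp add: add.assoc)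



lemma sb_mem: "8*a + 10*b + 11*c + 12*d \<in> gen {8,10,11,12}"
proof -
  show ?thesis unfolding gen_def
    by (rule CollectI, rule exI[of _ "(\<lambda>x. if x = 8 then a else if x = 10 then b else if x = 11 then c else d)"]) simp
qed

lemma sb_gen: "gen {8,10,11,12} = {x. \<exists>a b c d. x = 8*a + 10*b + 11*c + 12*d}"
proof
  show "gen {8,10,11,12} \<subseteq> {x. \<exists>a b c d. x = 8*a + 10*b + 11*c + 12*d}"
  proof
    fix x assume "x \<in> gen {8,10,11,12}"
    then obtain l where "x = (\<Sum>a\<in>{8,10,11,12}. l a * a)" unfolding gen_def by blast
    then have "x = 8*(l 8) + 10*(l 10) + 11*(l 11) + 12*(l 12)" by simp
    then show "x \<in> {x. \<exists>a b c d. x = 8*a + 10*b + 11*c + 12*d}" by blast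
  qed
next
  show "{x. \<exists>a b c d. x = 8*a + 10*b + 11*c + 12*d} \<subseteq> gen {8,10,11,12}" using sb_mem by blast
qed

lemma sb_small: fixes a b c d :: nat assumes "8*a + 10*b + 11*c + 12*d < 26"
  shows "8*a + 10*b + 11*c + 12*d \<in> {0, 8, 10, 11, 12, 16, 18, 19, 20, 21, 22, 23, 24}"
proof -
  have "a \<in> {0,1,2,3}" "b \<in> {0,1,2}" "c \<in> {0,1,2}" "d \<in> {0,1,2}" using assms by auto
  then show ?thesis using assms by auto
qed

lemma sb_big: fixes x :: nat shows "x \<ge> 26 \<Longrightarrow> x \<in> gen {8,10,11,12}"
proof (induction x rule: less_induct)
  case (less x)
  show ?case
  proof (cases "x \<ge> 34")
    case True
    then have "x - 8 \<in> gen {8,10,11,12}" using less by auto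
    then obtain a b c d where "x - 8 = 8*a + 10*b + 11*c + 12*d" unfolding sb_gen by blast
    then have "x = 8*(a+1) + 10*b + 11*c + 12*d" using True by simp
    then show ?thesis using sb_mem by metis
  next
    case False
    then have xs: "x \<in> {26,27,28,29,30,31,32,33}" using less.prems by auto
    have w26: "26 \<in> gen {8,10,11,12}" using sb_mem[of 2 1 0 0] by simp
    have w27: "27 \<in> gen {8,10,11,12}" using sb_mem[of 2 0 1 0] by simp
    have w28: "28 \<in> gen {8,10,11,12}" using sb_mem[of 1 2 0 0] by simp
    have w29: "29 \<in> gen {8,10,11,12}" using sb_mem[of 1 1 1 0] by simp
    have w30: "30 \<in> gen {8,10,11,12}" using sb_mem[of 0 3 0 0] by simp
    have w31: "31 \<in> gen {8,10,11,12}" using sb_mem[of 0 2 1 0] by simp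
    have w32: "32 \<in> gen {8,10,11,12}" using sb_mem[of 0 1 2 0] by simp
    have w33: "33 \<in> gen {8,10,11,12}" using sb_mem[of 0 0 3 0] by simp
    show ?thesis using xs w26 w27 w28 w29 w30 w31 w32 w33 by auto
  qed
qed

lemma sb_P: fixes x :: nat assumes "x \<in> {0, 8, 10, 11, 12, 16, 18, 19, 20, 21, 22, 23, 24}" shows "x \<in> gen {8,10,11,12}"
proof -
  have w0: "0 \<in> gen {8,10,11,12}" using sb_mem[of 0 0 0 0] by simp
  have w8: "8 \<in> gen {8,10,11,12}" using sb_mem[of 1 0 0 0] by simp
  have w10: "10 \<in> gen {8,10,11,12}" using sb_mem[of 0 1 0 0] by simp
  have w11: "11 \<in> gen {8,10,11,12}" using sb_mem[of 0 0 1 0] by simp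
  have w12: "12 \<in> gen {8,10,11,12}" using sb_mem[of 0 0 0 1] by simp
  have w16: "16 \<in> gen {8,10,11,12}" using sb_mem[of 2 0 0 0] by simp
  have w18: "18 \<in> gen {8,10,11,12}" using sb_mem[of 1 1 0 0] by simp
  have w19: "19 \<in> gen {8,10,11,12}" using sb_mem[of 1 0 1 0] by simp
  have w20: "20 \<in> gen {8,10,11,12}" using sb_mem[of 0 2 0 0] by simp
  have w21: "21 \<in> gen {8,10,11,12}" using sb_mem[of 0 1 1 0] by simp
  have w22: "22 \<in> gen {8,10,11,12}" using sb_mem[of 0 0 2 0] by simp
  have w23: "23 \<in> gen {8,10,11,12}" using sb_mem[of 0 0 1 1] by simp
  have w24: "24 \<in> gen {8,10,11,12}" using sb_mem[of 0 0 0 2] by simp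
  show ?thesis using assms w0 w8 w10 w11 w12 w16 w18 w19 w20 w21 w22 w23 w24 by auto
qed

lemma sb_char: "x \<in> gen {8,10,11,12} \<longleftrightarrow> x \<in> {0, 8, 10, 11, 12, 16, 18, 19, 20, 21, 22, 23, 24} \<or> x \<ge> 26"
proof
  assume "x \<in> gen {8,10,11,12}"
  then obtain a b c d where x: "x = 8*a + 10*b + 11*c + 12*d" unfolding sb_gen by blast
  show "x \<in> {0, 8, 10, 11, 12, 16, 18, 19, 20, 21, 22, 23, 24} \<or> x \<ge> 26"
  proof (cases "x < 26")
    case True then show ?thesis using sb_small[of a b c d] x by simp
  qed simp
next
  assume "x \<in> {0, 8, 10, 11, 12, 16, 18, 19, 20, 21, 22, 23, 24} \<or> x \<ge> 26"
  then show "x \<in> gen {8,10,11,12}" using sb_P sb_big by blast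
qed

lemma sb_ns: "numerical_semigroup (gen {8,10,11,12})"
proof -
  have "0 \<in> gen {8,10,11,12}" using sb_mem[of 0 0 0 0] by simp
  moreover have "\<forall>a\<in>gen {8,10,11,12}. \<forall>b\<in>gen {8,10,11,12}. a + b \<in> gen {8,10,11,12}"
  proof (intro ballI)
    fix x y assume "x \<in> gen {8,10,11,12}" "y \<in> gen {8,10,11,12}"
    then obtain a b c d a' b' c' d' where "x = 8*a + 10*b + 11*c + 12*d" "y = 8*a' + 10*b' + 11*c' + 12*d'"
      unfolding sb_gen by blast
    then have "x + y = 8*(a+a') + 10*(b+b') + 11*(c+c') + 12*(d+d')" by (simp add: algebra_simps)
    then show "x + y \<in> gen {8,10,11,12}" using sb_mem by metis
  qed
  moreover have "finite (UNIV - gen {8,10,11,12})"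
  proof -
    have "UNIV - gen {8,10,11,12} \<subseteq> {..<26}"
    proof
      fix x assume "x \<in> UNIV - gen {8,10,11,12}"
      then have "\<not> x \<ge> 26" using sb_big by blast
      then show "x \<in> {..<26}" by simp
    qed
    then show ?thesis using finite_subset by blast
  qed
  ultimately show ?thesis unfolding numerical_semigroup_def by blast
qed

lemma sb_pos: "y \<in> gen {8,10,11,12} \<Longrightarrow> y \<noteq> 0 \<Longrightarrow> y \<ge> 8"
proof -
  assume "y \<in> gen {8,10,11,12}" "y \<noteq> 0"
  then have "y \<in> {0, 8, 10, 11, 12, 16, 18, 19, 20, 21, 22, 23, 24} \<or> y \<ge> 26" unfolding sb_char by blast
  then show "y \<ge> 8" using \<open>y \<noteq> 0\<close> by (elim disjE insertE) auto
qed

lemma sb_mingens: "mingens (gen {8,10,11,12}) = {8,10,11,12}"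
proof
  show "mingens (gen {8,10,11,12}) \<subseteq> {8,10,11,12}"
  proof
    fix x assume mg: "x \<in> mingens (gen {8,10,11,12})"
    then have "x \<in> gen {8,10,11,12}" "x \<noteq> 0" by (auto simp: mingens_def)
    then obtain a b c d where x: "x = 8*a + 10*b + 11*c + 12*d" unfolding sb_gen by blast
    have ca: "a > 0 \<Longrightarrow> x = 8"
    proof (rule ccontr)
      assume h: "a > 0" "x \<noteq> 8"
      have "8*(a-1) + 10*b + 11*c + 12*d \<in> gen {8,10,11,12}" by (rule sb_mem)
      moreover have "x = 8 + (8*(a-1) + 10*b + 11*c + 12*d)" using h x by (simp add: algebra_simps)
      moreover have "8 \<in> gen {8,10,11,12}" using sb_mem[of 1 0 0 0] by simp
      ultimately show False using h mg unfolding mingens_def by force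
    qed
    have cb: "b > 0 \<Longrightarrow> x = 10"
    proof (rule ccontr)
      assume h: "b > 0" "x \<noteq> 10"
      have "8*a + 10*(b-1) + 11*c + 12*d \<in> gen {8,10,11,12}" by (rule sb_mem)
      moreover have "x = 10 + (8*a + 10*(b-1) + 11*c + 12*d)" using h x by (simp add: algebra_simps)
      moreover have "10 \<in> gen {8,10,11,12}" using sb_mem[of 0 1 0 0] by simp
      ultimately show False using h mg unfolding mingens_def by force
    qed
    have cc: "c > 0 \<Longrightarrow> x = 11"
    proof (rule ccontr)
      assume h: "c > 0" "x \<noteq> 11"
      have "8*a + 10*b + 11*(c-1) + 12*d \<in> gen {8,10,11,12}" by (rule sb_mem)
      moreover have "x = 11 + (8*a + 10*b + 11*(c-1) + 12*d)" using h x by (simp add: algebra_simps)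
      moreover have "11 \<in> gen {8,10,11,12}" using sb_mem[of 0 0 1 0] by simp
      ultimately show False using h mg unfolding mingens_def by force
    qed
    have cd: "d > 0 \<Longrightarrow> x = 12"
    proof (rule ccontr)
      assume h: "d > 0" "x \<noteq> 12"
      have "8*a + 10*b + 11*c + 12*(d-1) \<in> gen {8,10,11,12}" by (rule sb_mem)
      moreover have "x = 12 + (8*a + 10*b + 11*c + 12*(d-1))" using h x by (simp add: algebra_simps)
      moreover have "12 \<in> gen {8,10,11,12}" using sb_mem[of 0 0 0 1] by simp
      ultimately show False using h mg unfolding mingens_def by force
    qed
    have "a > 0 \<or> b > 0 \<or> c > 0 \<or> d > 0" using x \<open>x \<noteq> 0\<close> by auto
    then show "x \<in> {8,10,11,12}" using ca cb cc cd by auto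
  qed
next
  show "{8,10,11,12} \<subseteq> mingens (gen {8,10,11,12})"
  proof
    fix x :: nat assume x: "x \<in> {8,10,11,12}"
    then have "x \<in> gen {8,10,11,12}" using sb_char by auto
    moreover have "\<not> (\<exists>a\<in>gen {8,10,11,12}. \<exists>b\<in>gen {8,10,11,12}. a \<noteq> 0 \<and> b \<noteq> 0 \<and> x = a + b)"
    proof
      assume "\<exists>a\<in>gen {8,10,11,12}. \<exists>b\<in>gen {8,10,11,12}. a \<noteq> 0 \<and> b \<noteq> 0 \<and> x = a + b"
      then obtain a b where ab: "a \<in> gen {8,10,11,12}" "b \<in> gen {8,10,11,12}" "a \<noteq> 0" "b \<noteq> 0" "x = a + b" by blast
      then have "a \<ge> 8" "b \<ge> 8" using sb_pos by auto
      then show False using x ab(5) by auto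
    qed
    ultimately show "x \<in> mingens (gen {8,10,11,12})" using x unfolding mingens_def by auto
  qed
qed

lemma sb_mult: "mult (gen {8,10,11,12}) = 8"
  unfolding mult_def sb_mingens by simp

lemma sb_apery: "apery (gen {8,10,11,12}) = {0, 10, 11, 12, 21, 22, 23, 33}"
proof (rule set_eqI)
  fix x :: nat
  have iff: "x \<in> apery (gen {8,10,11,12}) \<longleftrightarrow> (x \<in> {0, 8, 10, 11, 12, 16, 18, 19, 20, 21, 22, 23, 24} \<or> x \<ge> 26) \<and> \<not> (x \<ge> 8 \<and> (x - 8 \<in> {0, 8, 10, 11, 12, 16, 18, 19, 20, 21, 22, 23, 24} \<or> x - 8 \<ge> 26))"
  proof -
    have "(\<exists>t\<in>gen {8,10,11,12}. x = t + 8) \<longleftrightarrow> (x \<ge> 8 \<and> x - 8 \<in> gen {8,10,11,12})" by force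
    then have "x \<in> apery (gen {8,10,11,12}) \<longleftrightarrow> x \<in> gen {8,10,11,12} \<and> \<not> (x \<ge> 8 \<and> x - 8 \<in> gen {8,10,11,12})"
      unfolding apery_def sb_mult by blast
    then show ?thesis by (simp only: sb_char)
  qed
  show "x \<in> apery (gen {8,10,11,12}) \<longleftrightarrow> x \<in> {0, 10, 11, 12, 21, 22, 23, 33}"
  proof (cases "x < 34")
    case True
    have all: "\<forall>x\<in>{..<34::nat}. ((x \<in> {0, 8, 10, 11, 12, 16, 18, 19, 20, 21, 22, 23, 24} \<or> x \<ge> 26) \<and> \<not> (x \<ge> 8 \<and> (x - 8 \<in> {0, 8, 10, 11, 12, 16, 18, 19, 20, 21, 22, 23, 24} \<or> x - 8 \<ge> 26))) \<longleftrightarrow> x \<in> {0, 10, 11, 12, 21, 22, 23, 33}"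
      by (simp add: lessThan_nat_numeral)
    show ?thesis unfolding iff using bspec[OF all, of x] True by simp
  next
    case False
    then have "x \<notin> {0, 8, 10, 11, 12, 16, 18, 19, 20, 21, 22, 23, 24}" "x - 8 \<notin> {0, 8, 10, 11, 12, 16, 18, 19, 20, 21, 22, 23, 24}" "x \<notin> {0, 10, 11, 12, 21, 22, 23, 33}" using False by auto
    then show ?thesis unfolding iff using False by simp
  qed
qed

lemma sb_reps: "reps (gen {8,10,11,12}) s = {l. (\<forall>x. x \<notin> {8,10,11,12} \<longrightarrow> l x = 0) \<and> l 8 * 8 + l 10 * 10 + l 11 * 11 + l 12 * 12 = s}"
  unfolding reps_def sb_mingens by (simp add: add.assoc)

lemma sb_sumM: "(\<Sum>g\<in>mingens (gen {8,10,11,12}). l g) = l 8 + l 10 + l 11 + l 12"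
  unfolding sb_mingens by (simp add: add.assoc)




lemma ord_le: "numerical_semigroup S \<Longrightarrow> s \<in> S \<Longrightarrow> (\<And>l. l \<in> reps S s \<Longrightarrow> (\<Sum>g\<in>mingens S. l g) \<le> B) \<Longrightarrow> ord S s \<le> B"
  using maxrep_exists by metis

lemma alpha_ge: "numerical_semigroup S \<Longrightarrow> g \<in> mingens S \<Longrightarrow> h * g \<in> apery S \<Longrightarrow> h \<le> alpha S g"
  unfolding alpha_def by (rule Max_ge) (use Aset_finite mingens_pos in auto)

lemma Bset_finite: "numerical_semigroup S \<Longrightarrow> g \<in> mingens S \<Longrightarrow> finite {h. h * g \<in> apery S \<and> ord S (h * g) = h}"
  by (rule finite_subset[OF _ Aset_finite]) (auto simp: mingens_pos)

lemma Cset_finite: "numerical_semigroup S \<Longrightarrow> g \<in> mingens S \<Longrightarrow> finite {h. h * g \<in> apery S \<and> ord S (h * g) = h \<and> (\<exists>!l. l \<in> maxreps S (h * g))}"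
  by (rule finite_subset[OF _ Aset_finite]) (auto simp: mingens_pos)

lemma beta_ge: "numerical_semigroup S \<Longrightarrow> g \<in> mingens S \<Longrightarrow> h * g \<in> apery S \<Longrightarrow> ord S (h * g) = h \<Longrightarrow> h \<le> beta S g"
  unfolding beta_def by (rule Max_ge) (use Bset_finite in auto)

lemma beta_eq: "numerical_semigroup S \<Longrightarrow> g \<in> mingens S \<Longrightarrow> h * g \<in> apery S \<Longrightarrow> ord S (h * g) = h
  \<Longrightarrow> (\<And>h'. h' * g \<in> apery S \<Longrightarrow> ord S (h' * g) = h' \<Longrightarrow> h' \<le> h) \<Longrightarrow> beta S g = h"
  unfolding beta_def by (rule Max_eqI) (use Bset_finite in auto)

lemma gamma_eq: "numerical_semigroup S \<Longrightarrow> g \<in> mingens S \<Longrightarrow> h * g \<in> apery S \<Longrightarrow> ord S (h * g) = h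
  \<Longrightarrow> (\<exists>!l. l \<in> maxreps S (h * g))
  \<Longrightarrow> (\<And>h'. h' * g \<in> apery S \<Longrightarrow> ord S (h' * g) = h' \<Longrightarrow> (\<exists>!l. l \<in> maxreps S (h' * g)) \<Longrightarrow> h' \<le> h) \<Longrightarrow> gamma S g = h"
  unfolding gamma_def by (rule Max_eqI) (use Cset_finite in auto)

lemma maxreps_I: "l \<in> reps S s \<Longrightarrow> (\<Sum>g\<in>mingens S. l g) = ord S s \<Longrightarrow> l \<in> maxreps S s"
  by (simp add: maxreps_def)

lemma sa_M: "mingens (gen {8,10,15}) - {mult (gen {8,10,15})} = {10,15}"
  unfolding sa_mingens sa_mult by auto

lemma sa_rect_iff: "rectangular \<delta> (gen {8,10,15}) \<longleftrightarrow>
   apery (gen {8,10,15}) = {l 10 * 10 + l 15 * 15 | l::nat\<Rightarrow>nat. l 10 \<le> \<delta> (gen {8,10,15}) 10 \<and> l 15 \<le> \<delta> (gen {8,10,15}) 15}"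
  unfolding rectangular_def sa_M by simp

lemma sa_ord_le: "s \<in> gen {8,10,15} \<Longrightarrow> s < 8 * (B + 1) \<Longrightarrow> ord (gen {8,10,15}) s \<le> B"
  by (rule ord_le[OF sa_ns]) (auto simp: sa_reps sa_sumM)

lemma sa_in: "x \<in> apery (gen {8,10,15}) \<Longrightarrow> x \<in> gen {8,10,15}" by (rule ap_S)

lemma sa_ord30: "ord (gen {8,10,15}) 30 = 3"
proof (rule antisym)
  show "ord (gen {8,10,15}) 30 \<le> 3" by (rule sa_ord_le) (auto simp: sa_char)
  show "3 \<le> ord (gen {8,10,15}) 30" using single_ord[OF sa_ns, of 10 3] by (simp add: sa_mingens)
qed

lemma sa_ord15: "ord (gen {8,10,15}) 15 = 1"
proof (rule antisym)
  show "ord (gen {8,10,15}) 15 \<le> 1" by (rule sa_ord_le) (auto simp: sa_char)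
  show "1 \<le> ord (gen {8,10,15}) 15" using single_ord[OF sa_ns, of 15 1] by (simp add: sa_mingens)
qed

lemma sa_ord45: "4 \<le> ord (gen {8,10,15}) 45"
proof -
  have "(\<lambda>x. if x = 10 then 3 else if x = 15 then 1 else 0) \<in> reps (gen {8,10,15}) 45"
    by (simp add: sa_reps)
  from ord_ge[OF sa_ns this] show ?thesis by (simp add: sa_sumM)
qed

lemma sa_beta10: "beta (gen {8,10,15}) 10 = 3"
proof (rule beta_eq[OF sa_ns])
  show "(10::nat) \<in> mingens (gen {8,10,15})" by (simp add: sa_mingens)
  show "3 * 10 \<in> apery (gen {8,10,15})" by (simp add: sa_apery)
  show "ord (gen {8,10,15}) (3 * 10) = 3" using sa_ord30 by simp
  fix h assume "h * 10 \<in> apery (gen {8,10,15})"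
  then show "h \<le> 3" unfolding sa_apery by (auto; presburger)
qed

lemma sa_beta15: "beta (gen {8,10,15}) 15 = 1"
proof (rule beta_eq[OF sa_ns])
  show "(15::nat) \<in> mingens (gen {8,10,15})" by (simp add: sa_mingens)
  show "1 * 15 \<in> apery (gen {8,10,15})" by (simp add: sa_apery)
  show "ord (gen {8,10,15}) (1 * 15) = 1" using sa_ord15 by simp
  fix h assume h: "h * 15 \<in> apery (gen {8,10,15})" "ord (gen {8,10,15}) (h * 15) = h"
  have "h \<in> {0,1,2,3}" using h(1) unfolding sa_apery by (auto; presburger)
  moreover have "h \<noteq> 2" using h(2) sa_ord30 by auto
  moreover have "h \<noteq> 3" using h(2) sa_ord45 by auto
  ultimately show "h \<le> 1" by auto
qed

lemma sa_box_wit: "i \<le> A \<Longrightarrow> j \<le> B \<Longrightarrow> i * 10 + j * 15 \<in> {l 10 * 10 + l 15 * 15 | l::nat\<Rightarrow>nat. l 10 \<le> A \<and> l 15 \<le> B}"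
  by (rule CollectI, rule exI[of _ "\<lambda>x. if x = 10 then i else j"]) simp

lemma sa_rect_beta: "rectangular beta (gen {8,10,15})"
  unfolding sa_rect_iff sa_beta10 sa_beta15
proof
  show "apery (gen {8,10,15}) \<subseteq> {l 10 * 10 + l 15 * 15 | l::nat\<Rightarrow>nat. l 10 \<le> 3 \<and> l 15 \<le> 1}"
    unfolding sa_apery
    using sa_box_wit[of 0 3 0 1] sa_box_wit[of 1 3 0 1] sa_box_wit[of 2 3 0 1] sa_box_wit[of 3 3 0 1]
      sa_box_wit[of 0 3 1 1] sa_box_wit[of 1 3 1 1] sa_box_wit[of 2 3 1 1] sa_box_wit[of 3 3 1 1]
    by simp
  show "{l 10 * 10 + l 15 * 15 | l::nat\<Rightarrow>nat. l 10 \<le> 3 \<and> l 15 \<le> 1} \<subseteq> apery (gen {8,10,15})"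
  proof
    fix x assume "x \<in> {l 10 * 10 + l 15 * 15 | l::nat\<Rightarrow>nat. l 10 \<le> 3 \<and> l 15 \<le> 1}"
    then obtain l :: "nat \<Rightarrow> nat" where l: "x = l 10 * 10 + l 15 * 15" "l 10 \<le> 3" "l 15 \<le> 1" by blast
    then have "l 10 \<in> {0,1,2,3}" "l 15 \<in> {0,1}" by auto
    then show "x \<in> apery (gen {8,10,15})" unfolding sa_apery l(1) by auto
  qed
qed

lemma sa_not_rect_alpha: "\<not> rectangular alpha (gen {8,10,15})"
proof
  assume r: "rectangular alpha (gen {8,10,15})"
  have a10: "1 \<le> alpha (gen {8,10,15}) 10"
    by (rule alpha_ge[OF sa_ns]) (auto simp: sa_mingens sa_apery)
  have a15: "2 \<le> alpha (gen {8,10,15}) 15"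
    by (rule alpha_ge[OF sa_ns]) (auto simp: sa_mingens sa_apery)
  have "1 * 10 + 2 * 15 \<in> {l 10 * 10 + l 15 * 15 | l::nat\<Rightarrow>nat. l 10 \<le> alpha (gen {8,10,15}) 10 \<and> l 15 \<le> alpha (gen {8,10,15}) 15}"
    by (rule sa_box_wit) (use a10 a15 in auto)
  then have "(40::nat) \<in> apery (gen {8,10,15})" using r unfolding sa_rect_iff by simp
  then show False unfolding sa_apery by simp
qed

lemma sb_M: "mingens (gen {8,10,11,12}) - {mult (gen {8,10,11,12})} = {10,11,12}"
  unfolding sb_mingens sb_mult by auto

lemma sb_rect_iff: "rectangular \<delta> (gen {8,10,11,12}) \<longleftrightarrow>
   apery (gen {8,10,11,12}) = {l 10 * 10 + l 11 * 11 + l 12 * 12 | l::nat\<Rightarrow>nat. l 10 \<le> \<delta> (gen {8,10,11,12}) 10 \<and> l 11 \<le> \<delta> (gen {8,10,11,12}) 11 \<and> l 12 \<le> \<delta> (gen {8,10,11,12}) 12}"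
  unfolding rectangular_def sb_M by (simp add: add.assoc)

lemma sb_ord_le: "s \<in> gen {8,10,11,12} \<Longrightarrow> s < 8 * (B + 1) \<Longrightarrow> ord (gen {8,10,11,12}) s \<le> B"
  by (rule ord_le[OF sb_ns]) (auto simp: sb_reps sb_sumM)

lemma sb_ord1: "g \<in> {10,11,12} \<Longrightarrow> ord (gen {8,10,11,12}) g = 1"
proof (rule antisym)
  assume g: "g \<in> {10,11,12}"
  then show "ord (gen {8,10,11,12}) g \<le> 1" by (intro sb_ord_le) (auto simp: sb_char)
  show "1 \<le> ord (gen {8,10,11,12}) g" using single_ord[OF sb_ns, of g 1] g by (simp add: sb_mingens)
qed

lemma sb_ord33: "ord (gen {8,10,11,12}) 33 = 3"
proof (rule antisym)
  have ap: "(33::nat) \<in> apery (gen {8,10,11,12})" by (simp add: sb_apery)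
  show "ord (gen {8,10,11,12}) 33 \<le> 3"
  proof (rule ord_le[OF sb_ns ap_S[OF ap]])
    fix l assume l: "l \<in> reps (gen {8,10,11,12}) 33"
    have "l 8 = 0" using ap_mult0[OF sb_ns ap l] by (simp add: sb_mult)
    then show "(\<Sum>g\<in>mingens (gen {8,10,11,12}). l g) \<le> 3" using l by (simp add: sb_reps sb_sumM)
  qed
  show "3 \<le> ord (gen {8,10,11,12}) 33" using single_ord[OF sb_ns, of 11 3] by (simp add: sb_mingens)
qed

lemma sb_ext: "l \<in> reps (gen {8,10,11,12}) s \<Longrightarrow> l' \<in> reps (gen {8,10,11,12}) s' \<Longrightarrow>
   l 8 = l' 8 \<Longrightarrow> l 10 = l' 10 \<Longrightarrow> l 11 = l' 11 \<Longrightarrow> l 12 = l' 12 \<Longrightarrow> l = l'"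
proof
  fix x assume a: "l \<in> reps (gen {8,10,11,12}) s" "l' \<in> reps (gen {8,10,11,12}) s'"
    "l 8 = l' 8" "l 10 = l' 10" "l 11 = l' 11" "l 12 = l' 12"
  show "l x = l' x"
  proof (cases "x \<in> {8,10,11,12}")
    case True then show ?thesis using a by auto
  next
    case False then show ?thesis using a by (simp add: sb_reps)
  qed
qed

lemma sb_uniq1: assumes g: "g \<in> {10,11,12}" shows "\<exists>!l. l \<in> maxreps (gen {8,10,11,12}) (1 * g)"
proof
  have gM: "g \<in> mingens (gen {8,10,11,12})" using g by (simp add: sb_mingens)
  show e: "ef g 1 \<in> maxreps (gen {8,10,11,12}) (1 * g)"
    by (rule maxreps_I[OF single_rep[OF sb_ns gM]]) (use sb_ord1[OF g] g in \<open>auto simp: sb_sumM ef_def\<close>)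
  fix l assume "l \<in> maxreps (gen {8,10,11,12}) (1 * g)"
  then have l: "l \<in> reps (gen {8,10,11,12}) g" "l 8 + l 10 + l 11 + l 12 = 1"
    using sb_ord1[OF g] by (auto simp: maxreps_def sb_sumM)
  then have eq: "l 8 * 8 + l 10 * 10 + l 11 * 11 + l 12 * 12 = g" by (simp add: sb_reps)
  have d: "l 8 = 0 \<or> l 8 = 1" "l 10 = 0 \<or> l 10 = 1" "l 11 = 0 \<or> l 11 = 1" "l 12 = 0 \<or> l 12 = 1"
    "g = 10 \<or> g = 11 \<or> g = 12" using l(2) g by auto
  have "l 8 = ef g 1 8 \<and> l 10 = ef g 1 10 \<and> l 11 = ef g 1 11 \<and> l 12 = ef g 1 12"
    using d eq l(2) by (elim disjE) (simp_all add: ef_def)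
  then show "l = ef g 1" using sb_ext[OF l(1) single_rep[OF sb_ns gM, of 1]] by simp
qed

lemma sb_gamma_aux:
  assumes bound: "\<And>h. h * g \<in> apery (gen {8,10,11,12}) \<Longrightarrow> ord (gen {8,10,11,12}) (h * g) = h \<Longrightarrow>
       (\<exists>!l. l \<in> maxreps (gen {8,10,11,12}) (h * g)) \<Longrightarrow> h \<le> 1"
    and g: "g \<in> {10,11,12}"
  shows "gamma (gen {8,10,11,12}) g = 1"
proof (rule gamma_eq[OF sb_ns])
  show "g \<in> mingens (gen {8,10,11,12})" using g by (simp add: sb_mingens)
  show "1 * g \<in> apery (gen {8,10,11,12})" using g by (auto simp: sb_apery)
  show "ord (gen {8,10,11,12}) (1 * g) = 1" using sb_ord1[OF g] by simp
  show "\<exists>!l. l \<in> maxreps (gen {8,10,11,12}) (1 * g)" by (rule sb_uniq1[OF g])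
qed (rule bound)

lemma sb_two: "l1 \<in> maxreps S s \<Longrightarrow> l2 \<in> maxreps S s \<Longrightarrow> l1 \<noteq> l2 \<Longrightarrow> \<not> (\<exists>!l. l \<in> maxreps S s)"
  by blast

lemma sb_gamma11: "gamma (gen {8,10,11,12}) 11 = 1"
proof (rule sb_gamma_aux)
  fix h assume h: "h * 11 \<in> apery (gen {8,10,11,12})" "ord (gen {8,10,11,12}) (h * 11) = h"
    "\<exists>!l. l \<in> maxreps (gen {8,10,11,12}) (h * 11)"
  have "h \<in> {0,1,2,3}" using h(1) unfolding sb_apery by (auto; presburger)
  moreover have "h \<noteq> 2"
  proof
    assume h2: "h = 2"
    have "ef 11 2 \<in> maxreps (gen {8,10,11,12}) 22"
      using h(2) h2 by (auto simp: maxreps_def sb_reps sb_sumM ef_def)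
    moreover have "(\<lambda>x. if x = 10 \<or> x = 12 then 1 else 0) \<in> maxreps (gen {8,10,11,12}) 22"
      using h(2) h2 by (auto simp: maxreps_def sb_reps sb_sumM)
    moreover have "ef 11 2 \<noteq> (\<lambda>x. if x = 10 \<or> x = 12 then 1 else 0)"
      by (auto simp: ef_def fun_eq_iff)
    ultimately show False using h(3) h2 by (auto dest: sb_two)
  qed
  moreover have "h \<noteq> 3"
  proof
    assume h3: "h = 3"
    have "ef 11 3 \<in> maxreps (gen {8,10,11,12}) 33"
      using h(2) h3 by (auto simp: maxreps_def sb_reps sb_sumM ef_def)
    moreover have "(\<lambda>x. if x = 10 \<or> x = 11 \<or> x = 12 then 1 else 0) \<in> maxreps (gen {8,10,11,12}) 33"
      using h(2) h3 by (auto simp: maxreps_def sb_reps sb_sumM)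
    moreover have "ef 11 3 \<noteq> (\<lambda>x. if x = 10 \<or> x = 11 \<or> x = 12 then 1 else 0)"
      by (auto simp: ef_def fun_eq_iff)
    ultimately show False using h(3) h3 by (auto dest: sb_two)
  qed
  ultimately show "h \<le> 1" by auto
qed simp

lemma sb_gamma10: "gamma (gen {8,10,11,12}) 10 = 1"
proof (rule sb_gamma_aux)
  fix h assume "h * 10 \<in> apery (gen {8,10,11,12})"
  then show "h \<le> 1" unfolding sb_apery by (auto; presburger)
qed simp

lemma sb_gamma12: "gamma (gen {8,10,11,12}) 12 = 1"
proof (rule sb_gamma_aux)
  fix h assume "h * 12 \<in> apery (gen {8,10,11,12})"
  then show "h \<le> 1" unfolding sb_apery by (auto; presburger)
qed simp

lemma sb_box_wit: "i \<le> A \<Longrightarrow> j \<le> B \<Longrightarrow> k \<le> C \<Longrightarrow> i * 10 + j * 11 + k * 12 \<in>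
   {l 10 * 10 + l 11 * 11 + l 12 * 12 | l::nat\<Rightarrow>nat. l 10 \<le> A \<and> l 11 \<le> B \<and> l 12 \<le> C}"
  by (rule CollectI, rule exI[of _ "\<lambda>x. if x = 10 then i else if x = 11 then j else k"]) simp

lemma sb_rect_gamma: "rectangular gamma (gen {8,10,11,12})"
  unfolding sb_rect_iff sb_gamma10 sb_gamma11 sb_gamma12
proof
  show "apery (gen {8,10,11,12}) \<subseteq> {l 10 * 10 + l 11 * 11 + l 12 * 12 | l::nat\<Rightarrow>nat. l 10 \<le> 1 \<and> l 11 \<le> 1 \<and> l 12 \<le> 1}"
    unfolding sb_apery
    using sb_box_wit[of 0 1 0 1 0 1] sb_box_wit[of 1 1 0 1 0 1] sb_box_wit[of 0 1 1 1 0 1] sb_box_wit[of 0 1 0 1 1 1]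
      sb_box_wit[of 1 1 1 1 0 1] sb_box_wit[of 1 1 0 1 1 1] sb_box_wit[of 0 1 1 1 1 1] sb_box_wit[of 1 1 1 1 1 1]
    by simp
  show "{l 10 * 10 + l 11 * 11 + l 12 * 12 | l::nat\<Rightarrow>nat. l 10 \<le> 1 \<and> l 11 \<le> 1 \<and> l 12 \<le> 1} \<subseteq> apery (gen {8,10,11,12})"
  proof
    fix x assume "x \<in> {l 10 * 10 + l 11 * 11 + l 12 * 12 | l::nat\<Rightarrow>nat. l 10 \<le> 1 \<and> l 11 \<le> 1 \<and> l 12 \<le> 1}"
    then obtain l :: "nat \<Rightarrow> nat" where l: "x = l 10 * 10 + l 11 * 11 + l 12 * 12" "l 10 \<le> 1" "l 11 \<le> 1" "l 12 \<le> 1" by blast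
    then have "l 10 \<in> {0,1}" "l 11 \<in> {0,1}" "l 12 \<in> {0,1}" by auto
    then show "x \<in> apery (gen {8,10,11,12})" unfolding sb_apery l(1) by auto
  qed
qed

lemma sb_not_rect_beta: "\<not> rectangular beta (gen {8,10,11,12})"
proof
  assume r: "rectangular beta (gen {8,10,11,12})"
  have b10: "1 \<le> beta (gen {8,10,11,12}) 10"
    by (rule beta_ge[OF sb_ns]) (use sb_ord1[of 10] in \<open>auto simp: sb_mingens sb_apery\<close>)
  have b11: "3 \<le> beta (gen {8,10,11,12}) 11"
    by (rule beta_ge[OF sb_ns]) (use sb_ord33 in \<open>auto simp: sb_mingens sb_apery\<close>)
  have "1 * 10 + 3 * 11 + 0 * 12 \<in> {l 10 * 10 + l 11 * 11 + l 12 * 12 | l::nat\<Rightarrow>nat. l 10 \<le> beta (gen {8,10,11,12}) 10 \<and> l 11 \<le> beta (gen {8,10,11,12}) 11 \<and> l 12 \<le> beta (gen {8,10,11,12}) 12}"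
    by (rule sb_box_wit) (use b10 b11 in auto)
  then have "(43::nat) \<in> apery (gen {8,10,11,12})" using r unfolding sb_rect_iff by simp
  then show False unfolding sb_apery by simp
qed

theorem mainTheorem6:
  shows "(\<forall>S. numerical_semigroup S \<longrightarrow>
            (rectangular alpha S \<longrightarrow> rectangular beta S) \<and>
            (rectangular beta S \<longrightarrow> rectangular gamma S))
       \<and> numerical_semigroup (gen {8, 10, 15})
       \<and> rectangular beta (gen {8, 10, 15}) \<and> \<not> rectangular alpha (gen {8, 10, 15})
       \<and> numerical_semigroup (gen {8, 10, 11, 12})
       \<and> rectangular gamma (gen {8, 10, 11, 12}) \<and> \<not> rectangular beta (gen {8, 10, 11, 12})"
  using general_part sa_ns sa_rect_beta sa_not_rect_alpha sb_ns sb_rect_gamma sb_not_rect_beta by blast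


end
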